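(* For every $j\ge1$, $a'=1,\dots,p_1$, $b'=1,\dots,p_2$, $$\Big(\sum_{a=1}^{p_1}\frac{\partial}{\partial t_{j,a}}+\sum_{b=1}^{p_2}\frac{\partial}{\partial\bar t_{j,b}}\Big)X=0\qquad\text{for }X\in\{L_{a'},\ \bar L_{b'},\ \mathcal A_{a'},\ \bar{\mathcal A}_{b'}\}.$$
   Context: $\mu$ finite Borel measure on an interval; weights $w_{1,a}$ ($a\le p_1$), $w_{2,b}$ ($b\le p_2$); compositions $\vec n_\ell\in\mathbb N^{p_\ell}$; each $i\in\mathbb Z_+$ is uniquely $i=q|\vec n_\ell|+n_{\ell,1}+\dots+n_{\ell,a-1}+r$ ($0\le r<n_{\ell,a}$), $a_\ell(i)=a$, $k_\ell(i)=qn_{\ell,a}+r$; moment matrix $g_{i,j}=\int x^{k_1(i)+k_2(j)}w_{1,a_1(i)}w_{2,a_2(j)}d\mu$. $e_{\ell,a}(k)=e_i$ with $a_\ell(i)=a,k_\ell(i)=k$; $\Lambda_{\ell,a}=\sum_ke_{\ell,a}(k)e_{\ell,a}(k+1)^\top$; $\chi_{\ell,a}(x)=\sum_ke_{\ell,a}(k)x^k$. Real times $t=(t_{j,a},\bar t_{j,b})$; $W_0(t)=\exp(\sum_{a,j}t_{j,a}\Lambda_{1,a}^j)$, $\bar W_0(t)=\exp(\sum_{b,j}\bar t_{j,b}(\Lambda_{2,b}^\top)^j)$, $g(t)=W_0(t)g\bar W_0(t)^{-1}$ (integrals assumed convergent), assumed to factorize smoothly in $t$ as $g(t)=S(t)^{-1}\bar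 S(t)$ with $S$ unit lower triangular and $\bar S$ upper triangular invertible. $L_a=S\Lambda_{1,a}S^{-1}$, $\bar L_b=\bar S\Lambda_{2,b}^\top\bar S^{-1}$, $\mathcal A_a(x,t)=S(t)\chi_{1,a}(x)$, $\bar{\mathcal A}_b(x,t)=(\bar S(t)^{-1})^\top\chi_{2,b}(x)$ (derivatives taken at fixed $x$). *)

theory Defs
  imports "HOL-Analysis.Analysis"
begin

type_synonym mat = "nat \<Rightarrow> nat \<Rightarrow> real"
type_synonym vec = "nat \<Rightarrow> real"
(* times: fst t j a = t_{j,a},  snd t j b = tbar_{j,b}  (only j \<ge> 1 is used) *)
type_synonym times = "(nat \<Rightarrow> nat \<Rightarrow> real) \<times> (nat \<Rightarrow> nat \<Rightarrow> real)"

definition cabs :: "nat \<Rightarrow> (nat \<Rightarrow> nat) \<Rightarrow> nat" where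
  "cabs p n = (\<Sum>a=1..p. n a)"

text \<open>i = q|n| + n_1 + ... + n_(a-1) + r with 0 \<le> r < n_a;  a(i) = a, k(i) = q n_a + r.\<close>
definition aidx :: "nat \<Rightarrow> (nat \<Rightarrow> nat) \<Rightarrow> nat \<Rightarrow> nat" where
  "aidx p n i = (LEAST a. i mod cabs p n < (\<Sum>b=1..a. n b))"

definition kidx :: "nat \<Rightarrow> (nat \<Rightarrow> nat) \<Rightarrow> nat \<Rightarrow> nat" where
  "kidx p n i = (i div cabs p n) * n (aidx p n i)
                + (i mod cabs p n - (\<Sum>b=1..<aidx p n i. n b))"

text \<open>Lambda_a = sum_k e_a(k) e_a(k+1)^T, written entrywise.\<close>
definition Lam :: "nat \<Rightarrow> (nat \<Rightarrow> nat) \<Rightarrow> nat \<Rightarrow> mat" where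
  "Lam p n a = (\<lambda>i i'. if aidx p n i = a \<and> aidx p n i' = a \<and> kidx p n i' = Suc (kidx p n i)
                        then 1 else 0)"

text \<open>chi_a(x) = sum_k e_a(k) x^k.\<close>
definition chi :: "nat \<Rightarrow> (nat \<Rightarrow> nat) \<Rightarrow> nat \<Rightarrow> real \<Rightarrow> vec" where
  "chi p n a x = (\<lambda>i. if aidx p n i = a then x ^ kidx p n i else 0)"

definition mmul :: "mat \<Rightarrow> mat \<Rightarrow> mat" where
  "mmul A B = (\<lambda>i k. \<Sum>m. A i m * B m k)"

definition mvec :: "mat \<Rightarrow> vec \<Rightarrow> vec" where
  "mvec A v = (\<lambda>i. \<Sum>m. A i m * v m)"

definition mtr :: "mat \<Rightarrow> mat" where
  "mtr A = (\<lambda>i k. A k i)"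

definition idm :: mat where
  "idm = (\<lambda>i k. if i = k then 1 else 0)"

definition unit_lower :: "mat \<Rightarrow> bool" where
  "unit_lower S \<longleftrightarrow> (\<forall>i k. i < k \<longrightarrow> S i k = 0) \<and> (\<forall>i. S i i = 1)"

definition upper :: "mat \<Rightarrow> bool" where
  "upper S \<longleftrightarrow> (\<forall>i k. k < i \<longrightarrow> S i k = 0)"

text \<open>An upper triangular infinite matrix is invertible (within upper triangular matrices)
  iff its diagonal entries are nonzero.\<close>
definition upper_invertible :: "mat \<Rightarrow> bool" where
  "upper_invertible S \<longleftrightarrow> upper S \<and> (\<forall>i. S i i \<noteq> 0)"

definition ltinv :: "mat \<Rightarrow> mat" where
  "ltinv S = (THE T. unit_lower T \<and> mmul S T = idm)"

definition utinv :: "mat \<Rightarrow> mat" where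
  "utinv S = (THE T. upper T \<and> mmul S T = idm)"

definition fin_times :: "times \<Rightarrow> bool" where
  "fin_times t \<longleftrightarrow> finite {(j, a). fst t j a \<noteq> 0} \<and> finite {(j, b). snd t j b \<noteq> 0}"

text \<open>Entries of g(t) = W_0(t) g Wbar_0(t)^{-1}: since Lambda_{1,a} chi_{1,a} = x chi_{1,a},
  W_0(t) acts on the a-block of rows as multiplication by exp(sum_j t_{j,a} x^j), and
  Wbar_0(t)^{-1} on the b-block of columns as multiplication by exp(- sum_j tbar_{j,b} x^j).\<close>
definition gt :: "real measure \<Rightarrow> nat \<Rightarrow> (nat \<Rightarrow> nat) \<Rightarrow> (nat \<Rightarrow> real \<Rightarrow> real)
                  \<Rightarrow> nat \<Rightarrow> (nat \<Rightarrow> nat) \<Rightarrow> (nat \<Rightarrow> real \<Rightarrow> real) \<Rightarrow> times \<Rightarrow> mat" where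
  "gt M p1 n1 w1 p2 n2 w2 t = (\<lambda>i k.
     LINT x|M. x ^ (kidx p1 n1 i + kidx p2 n2 k) * w1 (aidx p1 n1 i) x * w2 (aidx p2 n2 k) x
       * exp ((\<Sum>j. fst t (Suc j) (aidx p1 n1 i) * x ^ Suc j)
              - (\<Sum>j. snd t (Suc j) (aidx p2 n2 k) * x ^ Suc j)))"

definition upd1 :: "times \<Rightarrow> nat \<Rightarrow> nat \<Rightarrow> real \<Rightarrow> times" where
  "upd1 t j a s = ((fst t)(j := (fst t j)(a := s)), snd t)"

definition upd2 :: "times \<Rightarrow> nat \<Rightarrow> nat \<Rightarrow> real \<Rightarrow> times" where
  "upd2 t j b s = (fst t, (snd t)(j := (snd t j)(b := s)))"

definition D1 :: "nat \<Rightarrow> nat \<Rightarrow> (times \<Rightarrow> real) \<Rightarrow> times \<Rightarrow> real" where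
  "D1 j a F t = deriv (\<lambda>s. F (upd1 t j a s)) (fst t j a)"

definition D2 :: "nat \<Rightarrow> nat \<Rightarrow> (times \<Rightarrow> real) \<Rightarrow> times \<Rightarrow> real" where
  "D2 j b F t = deriv (\<lambda>s. F (upd2 t j b s)) (snd t j b)"

end

theory Submission
  imports Defs
begin


definition good :: "nat \<Rightarrow> nat \<Rightarrow> nat \<Rightarrow> times \<Rightarrow> (times \<Rightarrow> real) \<Rightarrow> bool" where
  "good p1 p2 j t F \<longleftrightarrow>
     (\<forall>a\<in>{1..p1}. (\<lambda>s. F (upd1 t j a s)) differentiable (at (fst t j a))) \<and>
     (\<forall>b\<in>{1..p2}. (\<lambda>s. F (upd2 t j b s)) differentiable (at (snd t j b)))"

definition dl :: "nat \<Rightarrow> nat \<Rightarrow> nat \<Rightarrow> times \<Rightarrow> (times \<Rightarrow> real) \<Rightarrow> real" where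
  "dl p1 p2 j t F = (\<Sum>a=1..p1. D1 j a F t) + (\<Sum>b=1..p2. D2 j b F t)"

lemma upd1_self[simp]: "upd1 t j a (fst t j a) = t"
  by (simp add: upd1_def)
lemma upd2_self[simp]: "upd2 t j b (snd t j b) = t"
  by (simp add: upd2_def)

lemma fin_upd1: "fin_times t \<Longrightarrow> fin_times (upd1 t j a s)"
proof -
  assume f: "fin_times t"
  have "{(j', a'). fst (upd1 t j a s) j' a' \<noteq> 0} \<subseteq> insert (j, a) {(j, a). fst t j a \<noteq> 0}"
    by (auto simp: upd1_def split: if_splits)
  moreover have "{(j', a'). snd (upd1 t j a s) j' a' \<noteq> 0} = {(j, b). snd t j b \<noteq> 0}"
    by (auto simp: upd1_def split: if_splits)
  ultimately show ?thesis using f unfolding fin_times_def by (metis finite_insert finite_subset)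
qed

lemma fin_upd2: "fin_times t \<Longrightarrow> fin_times (upd2 t j b s)"
proof -
  assume f: "fin_times t"
  have "{(j', a'). snd (upd2 t j b s) j' a' \<noteq> 0} \<subseteq> insert (j, b) {(j, a). snd t j a \<noteq> 0}"
    by (auto simp: upd2_def split: if_splits)
  moreover have "{(j', a'). fst (upd2 t j b s) j' a' \<noteq> 0} = {(j, b). fst t j b \<noteq> 0}"
    by (auto simp: upd2_def split: if_splits)
  ultimately show ?thesis using f unfolding fin_times_def by (metis finite_insert finite_subset)
qed

lemma ln_const: "(\<lambda>s. c) differentiable (at x)" "deriv (\<lambda>s. c) x = (0::real)"
proof -
  have h: "DERIV (\<lambda>s. c) x :> 0" by (rule DERIV_const)
  show "(\<lambda>s. c) differentiable (at x)" using h unfolding real_differentiable_def by blast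
  show "deriv (\<lambda>s. c) x = (0::real)" by (rule DERIV_imp_deriv[OF h])
qed

lemma dv: "f differentiable (at x) \<Longrightarrow> DERIV f x :> deriv f x" for x :: real
  by (simp only: DERIV_deriv_iff_real_differentiable)

lemma ln_add:
  fixes f g :: "real \<Rightarrow> real"
  assumes "f differentiable (at x)" "g differentiable (at x)"
  shows "(\<lambda>s. f s + g s) differentiable (at x)" "deriv (\<lambda>s. f s + g s) x = deriv f x + deriv g x"
proof -
  have h: "DERIV (\<lambda>s. f s + g s) x :> deriv f x + deriv g x" by (rule DERIV_add[OF dv[OF assms(1)] dv[OF assms(2)]])
  show "(\<lambda>s. f s + g s) differentiable (at x)" using h unfolding real_differentiable_def by blast
  show "deriv (\<lambda>s. f s + g s) x = deriv f x + deriv g x" by (rule DERIV_imp_deriv[OF h])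
qed

lemma ln_diff:
  fixes f g :: "real \<Rightarrow> real"
  assumes "f differentiable (at x)" "g differentiable (at x)"
  shows "(\<lambda>s. f s - g s) differentiable (at x)" "deriv (\<lambda>s. f s - g s) x = deriv f x - deriv g x"
proof -
  have h: "DERIV (\<lambda>s. f s - g s) x :> deriv f x - deriv g x" by (rule DERIV_diff[OF dv[OF assms(1)] dv[OF assms(2)]])
  show "(\<lambda>s. f s - g s) differentiable (at x)" using h unfolding real_differentiable_def by blast
  show "deriv (\<lambda>s. f s - g s) x = deriv f x - deriv g x" by (rule DERIV_imp_deriv[OF h])
qed

lemma ln_mult:
  fixes f g :: "real \<Rightarrow> real"
  assumes "f differentiable (at x)" "g differentiable (at x)"
  shows "(\<lambda>s. f s * g s) differentiable (at x)" "deriv (\<lambda>s. f s * g s) x = f x * deriv g x + g x * deriv f x"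
proof -
  have h: "DERIV (\<lambda>s. f s * g s) x :> deriv f x * g x + deriv g x * f x" by (rule DERIV_mult[OF dv[OF assms(1)] dv[OF assms(2)]])
  show "(\<lambda>s. f s * g s) differentiable (at x)" using h unfolding real_differentiable_def by blast
  have "deriv (\<lambda>s. f s * g s) x = deriv f x * g x + deriv g x * f x" by (rule DERIV_imp_deriv[OF h])
  then show "deriv (\<lambda>s. f s * g s) x = f x * deriv g x + g x * deriv f x" by (simp add: mult.commute)
qed

lemma ln_divide:
  fixes f g :: "real \<Rightarrow> real"
  assumes "f differentiable (at x)" "g differentiable (at x)" "g x \<noteq> 0"
  shows "(\<lambda>s. f s / g s) differentiable (at x)"
proof -
  have h: "DERIV (\<lambda>s. f s / g s) x :> (deriv f x * g x - f x * deriv g x) / (g x * g x)"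
    by (rule DERIV_divide[OF dv[OF assms(1)] dv[OF assms(2)] assms(3)])
  show ?thesis using h unfolding real_differentiable_def by blast
qed

lemma good_const: "good p1 p2 j t (\<lambda>_. c)" "dl p1 p2 j t (\<lambda>_. c) = 0"
  unfolding good_def dl_def D1_def D2_def by (simp_all add: ln_const)

lemma D1_add:
  assumes "(\<lambda>s. F (upd1 t j a s)) differentiable (at (fst t j a))"
          "(\<lambda>s. G (upd1 t j a s)) differentiable (at (fst t j a))"
  shows "D1 j a (\<lambda>x. F x + G x) t = D1 j a F t + D1 j a G t"
    "D1 j a (\<lambda>x. F x - G x) t = D1 j a F t - D1 j a G t"
    "D1 j a (\<lambda>x. F x * G x) t = F t * D1 j a G t + G t * D1 j a F t"
  unfolding D1_def using ln_add(2)[OF assms] ln_diff(2)[OF assms] ln_mult(2)[OF assms] by simp_all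

lemma D2_add:
  assumes "(\<lambda>s. F (upd2 t j a s)) differentiable (at (snd t j a))"
          "(\<lambda>s. G (upd2 t j a s)) differentiable (at (snd t j a))"
  shows "D2 j a (\<lambda>x. F x + G x) t = D2 j a F t + D2 j a G t"
    "D2 j a (\<lambda>x. F x - G x) t = D2 j a F t - D2 j a G t"
    "D2 j a (\<lambda>x. F x * G x) t = F t * D2 j a G t + G t * D2 j a F t"
  unfolding D2_def using ln_add(2)[OF assms] ln_diff(2)[OF assms] ln_mult(2)[OF assms] by simp_all

lemma good_add:
  assumes "good p1 p2 j t F" "good p1 p2 j t G"
  shows "good p1 p2 j t (\<lambda>x. F x + G x)"
        "dl p1 p2 j t (\<lambda>x. F x + G x) = dl p1 p2 j t F + dl p1 p2 j t G"
proof -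
  show "good p1 p2 j t (\<lambda>x. F x + G x)"
    using assms unfolding good_def by (simp add: ln_add(1))
  have "(\<Sum>a=1..p1. D1 j a (\<lambda>x. F x + G x) t) = (\<Sum>a=1..p1. D1 j a F t + D1 j a G t)"
    using assms unfolding good_def by (intro sum.cong refl D1_add) auto
  moreover have "(\<Sum>b=1..p2. D2 j b (\<lambda>x. F x + G x) t) = (\<Sum>b=1..p2. D2 j b F t + D2 j b G t)"
    using assms unfolding good_def by (intro sum.cong refl D2_add) auto
  ultimately show "dl p1 p2 j t (\<lambda>x. F x + G x) = dl p1 p2 j t F + dl p1 p2 j t G"
    unfolding dl_def by (simp add: sum.distrib)
qed

lemma good_diff:
  assumes "good p1 p2 j t F" "good p1 p2 j t G"
  shows "good p1 p2 j t (\<lambda>x. F x - G x)"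
        "dl p1 p2 j t (\<lambda>x. F x - G x) = dl p1 p2 j t F - dl p1 p2 j t G"
proof -
  show "good p1 p2 j t (\<lambda>x. F x - G x)"
    using assms unfolding good_def by (simp add: ln_diff(1))
  have "(\<Sum>a=1..p1. D1 j a (\<lambda>x. F x - G x) t) = (\<Sum>a=1..p1. D1 j a F t - D1 j a G t)"
    using assms unfolding good_def by (intro sum.cong refl D1_add) auto
  moreover have "(\<Sum>b=1..p2. D2 j b (\<lambda>x. F x - G x) t) = (\<Sum>b=1..p2. D2 j b F t - D2 j b G t)"
    using assms unfolding good_def by (intro sum.cong refl D2_add) auto
  ultimately show "dl p1 p2 j t (\<lambda>x. F x - G x) = dl p1 p2 j t F - dl p1 p2 j t G"
    unfolding dl_def by (simp add: sum_subtractf)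
qed

lemma good_mult:
  assumes "good p1 p2 j t F" "good p1 p2 j t G"
  shows "good p1 p2 j t (\<lambda>x. F x * G x)"
        "dl p1 p2 j t (\<lambda>x. F x * G x) = F t * dl p1 p2 j t G + G t * dl p1 p2 j t F"
proof -
  show "good p1 p2 j t (\<lambda>x. F x * G x)"
    using assms unfolding good_def by (simp add: ln_mult(1))
  have "(\<Sum>a=1..p1. D1 j a (\<lambda>x. F x * G x) t) = (\<Sum>a=1..p1. F t * D1 j a G t + G t * D1 j a F t)"
    using assms unfolding good_def by (intro sum.cong refl D1_add) auto
  moreover have "(\<Sum>b=1..p2. D2 j b (\<lambda>x. F x * G x) t) = (\<Sum>b=1..p2. F t * D2 j b G t + G t * D2 j b F t)"
    using assms unfolding good_def by (intro sum.cong refl D2_add) auto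
  ultimately show "dl p1 p2 j t (\<lambda>x. F x * G x) = F t * dl p1 p2 j t G + G t * dl p1 p2 j t F"
    unfolding dl_def by (simp add: sum.distrib sum_distrib_left[symmetric] distrib_left)
qed

lemma good_divide:
  assumes "good p1 p2 j t F" "good p1 p2 j t G" "G t \<noteq> 0"
  shows "good p1 p2 j t (\<lambda>x. F x / G x)"
  using assms unfolding good_def by (simp add: ln_divide)

lemma good_sum:
  assumes "finite A" "\<forall>m\<in>A. good p1 p2 j t (F m)"
  shows "good p1 p2 j t (\<lambda>x. \<Sum>m\<in>A. F m x) \<and>
         dl p1 p2 j t (\<lambda>x. \<Sum>m\<in>A. F m x) = (\<Sum>m\<in>A. dl p1 p2 j t (F m))"
  using assms
proof (induction A rule: finite_induct)
  case empty
  then show ?case using good_const by simp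
next
  case (insert a A)
  then have h: "good p1 p2 j t (F a)" "good p1 p2 j t (\<lambda>x. \<Sum>m\<in>A. F m x)"
    "dl p1 p2 j t (\<lambda>x. \<Sum>m\<in>A. F m x) = (\<Sum>m\<in>A. dl p1 p2 j t (F m))" by auto
  have e: "(\<lambda>x. \<Sum>m\<in>insert a A. F m x) = (\<lambda>x. F a x + (\<Sum>m\<in>A. F m x))"
    using insert by simp
  show ?case unfolding e using good_add[OF h(1) h(2)] h(3) insert by simp
qed

lemma good_cong:
  assumes "fin_times t" "\<And>t'. fin_times t' \<Longrightarrow> F t' = G t'"
  shows "good p1 p2 j t F = good p1 p2 j t G" "dl p1 p2 j t F = dl p1 p2 j t G"
proof -
  have e1: "(\<lambda>s. F (upd1 t jj a s)) = (\<lambda>s. G (upd1 t jj a s))" for jj a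
    using assms fin_upd1 by auto
  have e2: "(\<lambda>s. F (upd2 t jj a s)) = (\<lambda>s. G (upd2 t jj a s))" for jj a
    using assms fin_upd2 by auto
  show "good p1 p2 j t F = good p1 p2 j t G" "dl p1 p2 j t F = dl p1 p2 j t G"
    unfolding good_def dl_def D1_def D2_def e1 e2 assms(2)[OF assms(1)] by simp_all
qed



lemma lower_mmul:
  assumes "\<forall>i m. i < m \<longrightarrow> A i m = 0"
  shows "mmul A B i k = (\<Sum>m\<le>i. A i m * B m k)"
  unfolding mmul_def using assms by (intro suminf_finite) auto

lemma upper_mmul:
  assumes "upper A" "upper B"
  shows "mmul A B i k = (\<Sum>m\<in>{i..k}. A i m * B m k)"
  unfolding mmul_def using assms unfolding upper_def
  by (intro suminf_finite) (auto simp: not_le)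

lemma linv_eq:
  assumes "unit_lower S" "unit_lower T" "mmul S T = idm"
  shows "T i k = idm i k - (\<Sum>m<i. S i m * T m k)"
proof -
  have "idm i k = mmul S T i k" using assms by simp
  also have "\<dots> = (\<Sum>m\<le>i. S i m * T m k)"
    using assms(1) unfolding unit_lower_def by (intro lower_mmul) auto
  also have "\<dots> = S i i * T i k + (\<Sum>m<i. S i m * T m k)"
    by (simp add: lessThan_Suc_atMost[symmetric])
  finally show ?thesis using assms(1) unfolding unit_lower_def by simp
qed

lemma uinv_eq:
  assumes "upper U" "upper V" "mmul U V = idm" "i \<le> k"
  shows "U i i * V i k = idm i k - (\<Sum>m\<in>{i<..k}. U i m * V m k)"
proof -
  have "idm i k = mmul U V i k" using assms by simp
  also have "\<dots> = (\<Sum>m\<in>{i..k}. U i m * V m k)"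
    using assms by (intro upper_mmul)
  also have "{i..k} = insert i {i<..k}" using assms(4) by auto
  finally show ?thesis by simp
qed

function linv :: "mat \<Rightarrow> nat \<Rightarrow> nat \<Rightarrow> real" where
  "linv S k i = (if i < k then 0 else if i = k then 1 else - (\<Sum>m<i. S i m * linv S k m))"
  by pat_completeness auto
termination by (relation "Wellfounded.measure (\<lambda>(S,k,i). i)") auto

declare linv.simps[simp del]

lemma linv_lt: "i < k \<Longrightarrow> linv S k i = 0" by (subst linv.simps) simp
lemma linv_eq1: "linv S k k = 1" by (subst linv.simps) simp
lemma linv_gt: "k < i \<Longrightarrow> linv S k i = - (\<Sum>m<i. S i m * linv S k m)" by (subst linv.simps) simp

function uinv :: "mat \<Rightarrow> nat \<Rightarrow> nat \<Rightarrow> real" where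
  "uinv U k i = (if k < i then 0 else (idm i k - (\<Sum>m\<in>{i<..k}. U i m * uinv U k m)) / U i i)"
  by pat_completeness auto
termination by (relation "Wellfounded.measure (\<lambda>(U,k,i). k - i)") auto

declare uinv.simps[simp del]

lemma uinv_gt: "k < i \<Longrightarrow> uinv U k i = 0" by (subst uinv.simps) simp
lemma uinv_le: "i \<le> k \<Longrightarrow> uinv U k i = (idm i k - (\<Sum>m\<in>{i<..k}. U i m * uinv U k m)) / U i i"
  by (subst uinv.simps) simp

lemma ltinv_ok:
  assumes S: "unit_lower S"
  shows "unit_lower (ltinv S) \<and> mmul S (ltinv S) = idm"
proof -
  define T0 where "T0 = (\<lambda>i k. linv S k i)"
  have ul: "unit_lower T0" unfolding unit_lower_def T0_def by (auto simp: linv_lt linv_eq1)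
  have inv: "mmul S T0 = idm"
  proof (intro ext)
    fix i k
    have "mmul S T0 i k = (\<Sum>m\<le>i. S i m * T0 m k)"
      using S unfolding unit_lower_def by (intro lower_mmul) auto
    also have "\<dots> = S i i * T0 i k + (\<Sum>m<i. S i m * T0 m k)"
      by (simp add: lessThan_Suc_atMost[symmetric])
    also have "\<dots> = idm i k"
    proof (cases "i < k")
      case True
      then have "\<forall>m<i. T0 m k = 0" unfolding T0_def by (auto simp: linv_lt)
      then show ?thesis using True by (simp add: T0_def linv_lt idm_def)
    next
      case False
      show ?thesis
      proof (cases "i = k")
        case True
        have "\<forall>m<i. T0 m k = 0" using True unfolding T0_def by (auto simp: linv_lt)
        then show ?thesis using True S unfolding unit_lower_def
          by (simp add: T0_def linv_eq1 idm_def)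
      next
        case ne: False
        then have "k < i" using False by simp
        then have "T0 i k = - (\<Sum>m<i. S i m * T0 m k)"
          unfolding T0_def by (rule linv_gt)
        then show ?thesis using S ne unfolding unit_lower_def by (simp add: idm_def)
      qed
    qed
    finally show "mmul S T0 i k = idm i k" .
  qed
  have uniq: "T = T0" if "unit_lower T" "mmul S T = idm" for T
  proof -
    have "\<forall>k. T i k = T0 i k" for i
    proof (induction i rule: less_induct)
      case (less i)
      show ?case
      proof
        fix k
        have "T i k = idm i k - (\<Sum>m<i. S i m * T m k)" by (rule linv_eq[OF S that])
        also have "\<dots> = idm i k - (\<Sum>m<i. S i m * T0 m k)" using less by simp
        also have "\<dots> = T0 i k" by (rule linv_eq[OF S ul inv, symmetric])
        finally show "T i k = T0 i k" .
      qed
    qed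
    then show ?thesis by auto
  qed
  have "ltinv S = T0" unfolding ltinv_def
    by (rule the_equality) (use ul inv in blast, use uniq in blast)
  then show ?thesis using ul inv by simp
qed

lemma utinv_ok:
  assumes U: "upper_invertible U"
  shows "upper (utinv U) \<and> mmul U (utinv U) = idm"
proof -
  have Uu: "upper U" and Ud: "\<And>i. U i i \<noteq> 0" using U unfolding upper_invertible_def by auto
  define V0 where "V0 = (\<lambda>i k. uinv U k i)"
  have up: "upper V0" unfolding upper_def V0_def by (auto simp: uinv_gt)
  have inv: "mmul U V0 = idm"
  proof (intro ext)
    fix i k
    have "mmul U V0 i k = (\<Sum>m\<in>{i..k}. U i m * V0 m k)"
      using Uu up by (intro upper_mmul)
    also have "\<dots> = idm i k"
    proof (cases "i \<le> k")
      case True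
      then have "{i..k} = insert i {i<..k}" by auto
      then show ?thesis using True Ud[of i]
        by (simp add: V0_def uinv_le[of i k U])
    next
      case False
      then show ?thesis by (simp add: idm_def)
    qed
    finally show "mmul U V0 i k = idm i k" .
  qed
  have uniq: "V = V0" if "upper V" "mmul U V = idm" for V
  proof -
    have vk: "\<forall>i. k - i = d \<longrightarrow> V i k = V0 i k" for d k
    proof (induction d rule: less_induct)
      case (less d)
      show ?case
      proof (intro allI impI)
        fix i assume d: "k - i = d"
        show "V i k = V0 i k"
        proof (cases "i \<le> k")
          case True
          have "U i i * V i k = idm i k - (\<Sum>m\<in>{i<..k}. U i m * V m k)"
            by (rule uinv_eq[OF Uu that True])
          also have "\<dots> = idm i k - (\<Sum>m\<in>{i<..k}. U i m * V0 m k)"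
          proof -
            have "V m k = V0 m k" if "m \<in> {i<..k}" for m
              using less.IH[of "k - m"] that d by auto
            then show ?thesis by simp
          qed
          also have "\<dots> = U i i * V0 i k" by (rule uinv_eq[OF Uu up inv True, symmetric])
          finally show ?thesis using Ud[of i] by simp
        next
          case False
          then show ?thesis using that(1) up unfolding upper_def by auto
        qed
      qed
    qed
    then show ?thesis using vk by (intro ext) blast
  qed
  have "utinv U = V0" unfolding utinv_def
    by (rule the_equality) (use up inv in blast, use uniq in blast)
  then show ?thesis using up inv by simp
qed



lemma cabs_pos:
  assumes "1 \<le> p" "\<forall>a\<in>{1..p}. 1 \<le> n a"
  shows "0 < cabs p n"
proof -
  have "n 1 \<le> (\<Sum>a=1..p. n a)" using assms by (intro member_le_sum) auto
  moreover have "1 \<le> n 1" using assms by auto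
  ultimately show ?thesis unfolding cabs_def by linarith
qed

lemma aidx_range:
  assumes "1 \<le> p" "\<forall>a\<in>{1..p}. 1 \<le> n a"
  shows "aidx p n i \<in> {1..p}"
proof -
  have c: "0 < cabs p n" by (rule cabs_pos[OF assms])
  have P: "i mod cabs p n < (\<Sum>b=1..p. n b)" using c unfolding cabs_def by simp
  have le: "aidx p n i \<le> p" unfolding aidx_def by (rule Least_le[of "\<lambda>a. i mod cabs p n < (\<Sum>b=1..a. n b)", OF P])
  have "i mod cabs p n < (\<Sum>b=1..aidx p n i. n b)" unfolding aidx_def by (rule LeastI[of "\<lambda>a. i mod cabs p n < (\<Sum>b=1..a. n b)", OF P])
  then have "aidx p n i \<noteq> 0"
  proof (rule contrapos_pn)
    assume "aidx p n i = 0"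
    then show "\<not> i mod cabs p n < (\<Sum>b=1..aidx p n i. n b)" by simp
  qed
  then show ?thesis using le by auto
qed

lemma kidx_ge:
  assumes "1 \<le> p" "\<forall>a\<in>{1..p}. 1 \<le> n a"
  shows "m div cabs p n \<le> kidx p n m"
proof -
  have "1 \<le> n (aidx p n m)" using aidx_range[OF assms] assms by auto
  then have "m div cabs p n \<le> (m div cabs p n) * n (aidx p n m)" by simp
  then show ?thesis unfolding kidx_def by linarith
qed

lemma kidx_fin:
  assumes "1 \<le> p" "\<forall>a\<in>{1..p}. 1 \<le> n a"
  shows "finite {m. kidx p n m = K}"
proof -
  have c: "0 < cabs p n" by (rule cabs_pos[OF assms])
  have "{m. kidx p n m = K} \<subseteq> {..< Suc K * cabs p n}"
  proof
    fix m assume "m \<in> {m. kidx p n m = K}"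
    then have "m div cabs p n \<le> K" using kidx_ge[OF assms, of m] by simp
    then have "m div cabs p n < Suc K" by simp
    then show "m \<in> {..< Suc K * cabs p n}" using c by (simp add: div_less_iff_less_mult)
  qed
  then show ?thesis by (rule finite_subset) simp
qed

lemma Lam_fin:
  assumes "1 \<le> p" "\<forall>a\<in>{1..p}. 1 \<le> n a"
  shows "finite {m. Lam p n a nn m \<noteq> 0}"
proof -
  have "{m. Lam p n a nn m \<noteq> 0} \<subseteq> {m. kidx p n m = Suc (kidx p n nn)}"
    unfolding Lam_def by (auto split: if_splits)
  then show ?thesis using kidx_fin[OF assms] by (rule finite_subset)
qed



lemma suminf_upd:
  fixes f :: "nat \<Rightarrow> real"
  assumes sm: "summable (\<lambda>m. f (Suc m) * x ^ Suc m)" and j: "1 \<le> j"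
  shows "(\<Sum>m. (f(j := c)) (Suc m) * x ^ Suc m) = (\<Sum>m. f (Suc m) * x ^ Suc m) + (c - f j) * x ^ j"
proof -
  have e: "(\<lambda>m. (f(j := c)) (Suc m) * x ^ Suc m) =
        (\<lambda>m. f (Suc m) * x ^ Suc m + (if m = j - 1 then (c - f j) * x ^ j else 0))"
    using j by (auto simp: fun_eq_iff algebra_simps)
  have s2: "(\<lambda>m. if m = j - 1 then (c - f j) * x ^ j else 0) sums ((c - f j) * x ^ j)"
    using sums_single[of "j - 1" "\<lambda>_. (c - f j) * x ^ j"] by simp
  show ?thesis unfolding e
    using sums_add[OF summable_sums[OF sm] s2] by (rule sums_unique[symmetric])
qed

lemma summ1:
  assumes "fin_times t"
  shows "summable (\<lambda>m. fst t (Suc m) a * x ^ Suc m)"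
proof (rule summable_finite)
  have "{m. fst t (Suc m) a \<noteq> 0} \<subseteq> (\<lambda>p. fst p - 1) ` {(j, a). fst t j a \<noteq> 0}"
    by (auto intro!: image_eqI[where x="(Suc _, a)"])
  then show "finite {m. fst t (Suc m) a \<noteq> 0}"
    using assms unfolding fin_times_def by (meson finite_imageI finite_subset)
qed auto

lemma summ2:
  assumes "fin_times t"
  shows "summable (\<lambda>m. snd t (Suc m) a * x ^ Suc m)"
proof (rule summable_finite)
  have "{m. snd t (Suc m) a \<noteq> 0} \<subseteq> (\<lambda>p. fst p - 1) ` {(j, a). snd t j a \<noteq> 0}"
    by (auto intro!: image_eqI[where x="(Suc _, a)"])
  then show "finite {m. snd t (Suc m) a \<noteq> 0}"
    using assms unfolding fin_times_def by (meson finite_imageI finite_subset)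
qed auto

lemma gt_dl:
  assumes t: "fin_times t" and j: "1 \<le> j"
    and p1: "1 \<le> p1" and n1: "\<forall>a\<in>{1..p1}. 1 \<le> n1 a"
    and p2: "1 \<le> p2" and n2: "\<forall>b\<in>{1..p2}. 1 \<le> n2 b"
    and gd: "good p1 p2 j t (\<lambda>t'. gt M p1 n1 w1 p2 n2 w2 t' i k)"
  shows "dl p1 p2 j t (\<lambda>t'. gt M p1 n1 w1 p2 n2 w2 t' i k) = 0"
proof -
  define G where "G = (\<lambda>t'. gt M p1 n1 w1 p2 n2 w2 t' i k)"
  define a0 where "a0 = aidx p1 n1 i"
  define b0 where "b0 = aidx p2 n2 k"
  have a0: "a0 \<in> {1..p1}" unfolding a0_def by (rule aidx_range[OF p1 n1])
  have b0: "b0 \<in> {1..p2}" unfolding b0_def by (rule aidx_range[OF p2 n2])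
  define u where "u = fst t j a0"
  define v where "v = snd t j b0"
  have Gdef: "G t' = (LINT x|M. x ^ (kidx p1 n1 i + kidx p2 n2 k) * w1 a0 x * w2 b0 x
       * exp ((\<Sum>j. fst t' (Suc j) a0 * x ^ Suc j) - (\<Sum>j. snd t' (Suc j) b0 * x ^ Suc j)))" for t'
    unfolding G_def gt_def a0_def b0_def by simp
  have c1: "D1 j a G t = 0" if "a \<noteq> a0" for a
  proof -
    have e: "fst (upd1 t j a s) m a0 = fst t m a0" "snd (upd1 t j a s) = snd t" for m s
      using that by (auto simp: upd1_def)
    have "(\<lambda>s. G (upd1 t j a s)) = (\<lambda>s. G t)"
      unfolding Gdef e by simp
    then show ?thesis unfolding D1_def by (simp add: ln_const)
  qed
  have c2: "D2 j b G t = 0" if "b \<noteq> b0" for b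
  proof -
    have e: "snd (upd2 t j b s) m b0 = snd t m b0" "fst (upd2 t j b s) = fst t" for m s
      using that by (auto simp: upd2_def)
    have "(\<lambda>s. G (upd2 t j b s)) = (\<lambda>s. G t)"
      unfolding Gdef e by simp
    then show ?thesis unfolding D2_def by (simp add: ln_const)
  qed
  have key: "G (upd2 t j b0 s) = G (upd1 t j a0 (u + v - s))" for s
  proof -
    have e1: "(\<Sum>m. snd (upd2 t j b0 s) (Suc m) b0 * x ^ Suc m)
        = (\<Sum>m. snd t (Suc m) b0 * x ^ Suc m) + (s - v) * x ^ j" for x
    proof -
      have "(\<lambda>m. snd (upd2 t j b0 s) (Suc m) b0 * x ^ Suc m) =
            (\<lambda>m. ((\<lambda>m. snd t m b0)(j := s)) (Suc m) * x ^ Suc m)"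
        by (auto simp: upd2_def fun_eq_iff)
      then show ?thesis using suminf_upd[where f="\<lambda>m. snd t m b0", OF summ2[OF t] j]
        by (simp add: v_def)
    qed
    have e2: "(\<Sum>m. fst (upd1 t j a0 (u + v - s)) (Suc m) a0 * x ^ Suc m)
        = (\<Sum>m. fst t (Suc m) a0 * x ^ Suc m) + (v - s) * x ^ j" for x
    proof -
      have "(\<lambda>m. fst (upd1 t j a0 (u + v - s)) (Suc m) a0 * x ^ Suc m) =
            (\<lambda>m. ((\<lambda>m. fst t m a0)(j := u + v - s)) (Suc m) * x ^ Suc m)"
        by (auto simp: upd1_def fun_eq_iff)
      then show ?thesis using suminf_upd[where f="\<lambda>m. fst t m a0", OF summ1[OF t] j]
        by (simp add: u_def)
    qed
    have e3: "fst (upd2 t j b0 s) = fst t" "snd (upd1 t j a0 r) = snd t" for r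
      by (simp_all add: upd1_def upd2_def)
    show ?thesis unfolding Gdef e1 e2 e3 by (simp add: algebra_simps)
  qed
  have diff: "(\<lambda>s. G (upd1 t j a0 s)) differentiable (at u)"
    using gd a0 unfolding good_def G_def u_def by auto
  then have d1: "DERIV (\<lambda>s. G (upd1 t j a0 s)) u :> D1 j a0 G t"
    unfolding D1_def u_def[symmetric] by (rule dv)
  have "DERIV (\<lambda>s. u + v - s) v :> -1"
    by (auto intro!: derivative_eq_intros)
  from DERIV_chain2[OF _ this, of "\<lambda>s. G (upd1 t j a0 s)" "D1 j a0 G t"] d1
  have "DERIV (\<lambda>s. G (upd1 t j a0 (u + v - s))) v :> D1 j a0 G t * -1" by simp
  then have "D2 j b0 G t = - D1 j a0 G t"
    unfolding D2_def key v_def[symmetric] by (auto dest: DERIV_imp_deriv)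
  moreover have "(\<Sum>a=1..p1. D1 j a G t) = D1 j a0 G t"
    using a0 c1 by (subst sum.remove[of _ a0]) (auto intro!: sum.neutral)
  moreover have "(\<Sum>b=1..p2. D2 j b G t) = D2 j b0 G t"
    using b0 c2 by (subst sum.remove[of _ b0]) (auto intro!: sum.neutral)
  ultimately show ?thesis unfolding dl_def G_def by simp
qed



lemma sum_single_nz:
  fixes f :: "nat \<Rightarrow> real"
  assumes "finite A" "m0 \<in> A" "\<And>m. m \<in> A \<Longrightarrow> m \<noteq> m0 \<Longrightarrow> f m = 0"
  shows "sum f A = f m0"
proof -
  have "sum f A = f m0 + sum f (A - {m0})" using assms by (simp add: sum.remove)
  also have "sum f (A - {m0}) = 0" using assms by (intro sum.neutral) auto
  finally show ?thesis by simp
qed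

locale lax =
  fixes p1 p2 :: nat and S Sb G :: "times \<Rightarrow> mat" and j :: nat and t :: times
  assumes t: "fin_times t"
  and S_tri: "\<forall>t. fin_times t \<longrightarrow> unit_lower (S t)"
  and Sb_tri: "\<forall>t. fin_times t \<longrightarrow> upper_invertible (Sb t)"
  and factor: "\<forall>t. fin_times t \<longrightarrow> G t = mmul (ltinv (S t)) (Sb t)"
  and gS: "\<forall>i k. good p1 p2 j t (\<lambda>t'. S t' i k)"
  and gU: "\<forall>i k. good p1 p2 j t (\<lambda>t'. Sb t' i k)"
  and gG: "\<forall>i k. good p1 p2 j t (\<lambda>t'. G t' i k) \<longrightarrow> dl p1 p2 j t (\<lambda>t'. G t' i k) = 0"
begin

abbreviation "gd \<equiv> good p1 p2 j t"
abbreviation "dd \<equiv> dl p1 p2 j t"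
definition "Z F \<longleftrightarrow> gd F \<and> dd F = 0"

abbreviation "L t' \<equiv> ltinv (S t')"
abbreviation "V t' \<equiv> utinv (Sb t')"

lemma Lt: "fin_times t' \<Longrightarrow> unit_lower (L t') \<and> mmul (S t') (L t') = idm"
  using S_tri ltinv_ok by blast

lemma Vt: "fin_times t' \<Longrightarrow> upper (V t') \<and> mmul (Sb t') (V t') = idm"
  using Sb_tri utinv_ok by blast

lemma Ut: "fin_times t' \<Longrightarrow> upper (Sb t') \<and> (\<forall>i. Sb t' i i \<noteq> 0)"
  using Sb_tri unfolding upper_invertible_def by blast

lemma St: "fin_times t' \<Longrightarrow> \<forall>i m. i < m \<longrightarrow> S t' i m = 0"
  using S_tri unfolding unit_lower_def by blast

lemma Lt0: "fin_times t' \<Longrightarrow> \<forall>i m. i < m \<longrightarrow> L t' i m = 0"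
  using Lt unfolding unit_lower_def by blast

lemma cong:
  assumes e: "\<And>t'. fin_times t' \<Longrightarrow> F t' = H t'"
  shows "gd F = gd H \<and> dd F = dd H"
  using good_cong[OF t e] by simp

lemma const_on:
  assumes e: "\<And>t'. fin_times t' \<Longrightarrow> F t' = c"
  shows "gd F \<and> dd F = 0"
  using cong[OF e] good_const[of p1 p2 j t c] by simp

lemma gS': "gd (\<lambda>t'. S t' i k)" using gS by blast
lemma gU': "gd (\<lambda>t'. Sb t' i k)" using gU by blast

lemma gL: "gd (\<lambda>t'. L t' i k)"
proof (induction i arbitrary: k rule: less_induct)
  case (less i)
  have "gd (\<lambda>t'. idm i k - (\<Sum>m<i. S t' i m * L t' m k))"
    using less gS' by (intro good_diff good_const good_sum[THEN conjunct1] ballI good_mult) auto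
  moreover have eq: "L t' i k = idm i k - (\<Sum>m<i. S t' i m * L t' m k)" if "fin_times t'" for t'
    using linv_eq[of "S t'" "L t'" i k] S_tri Lt[OF that] that by blast
  ultimately show ?case using cong[OF eq] by simp
qed

lemma gV: "gd (\<lambda>t'. V t' i k)"
proof -
  have "\<forall>i. k - i = d \<longrightarrow> gd (\<lambda>t'. V t' i k)" for d
  proof (induction d rule: less_induct)
    case (less d)
    show ?case
    proof (intro allI impI)
      fix i assume d: "k - i = d"
      show "gd (\<lambda>t'. V t' i k)"
      proof (cases "i \<le> k")
        case True
        have IH: "gd (\<lambda>t'. V t' m k)" if "m \<in> {i<..k}" for m
          using less.IH[of "k - m"] that d by auto
        have "gd (\<lambda>t'. (idm i k - (\<Sum>m\<in>{i<..k}. Sb t' i m * V t' m k)) / Sb t' i i)"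
          using IH gU' Ut[OF t]
          by (intro good_divide good_diff good_const good_sum[THEN conjunct1] ballI good_mult) auto
        moreover have eq: "V t' i k = (idm i k - (\<Sum>m\<in>{i<..k}. Sb t' i m * V t' m k)) / Sb t' i i"
          if "fin_times t'" for t'
        proof -
          have "Sb t' i i * V t' i k = idm i k - (\<Sum>m\<in>{i<..k}. Sb t' i m * V t' m k)"
            using uinv_eq[of "Sb t'" "V t'" i k] Ut[OF that] Vt[OF that] True by blast
          then show ?thesis using Ut[OF that] by (simp add: field_simps)
        qed
        ultimately show ?thesis using cong[OF eq] by simp
      next
        case False
        have "V t' i k = 0" if "fin_times t'" for t'
          using Vt[OF that] False unfolding upper_def by auto
        from const_on[OF this] show ?thesis by simp
      qed
    qed
  qed
  then show ?thesis by blast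
qed

lemma Gexp:
  assumes f: "fin_times t'"
  shows "G t' i k = (\<Sum>m\<le>i. L t' i m * Sb t' m k)"
proof -
  have "G t' = mmul (L t') (Sb t')" using factor f by blast
  then show ?thesis using lower_mmul[OF Lt0[OF f]] by simp
qed

lemma gGd: "gd (\<lambda>t'. G t' i k) \<and> dd (\<lambda>t'. G t' i k) = 0"
proof -
  have "gd (\<lambda>t'. \<Sum>m\<le>i. L t' i m * Sb t' m k)"
    using gL gU' by (intro good_sum[THEN conjunct1] ballI good_mult) auto
  then have "gd (\<lambda>t'. G t' i k)" using cong[of "\<lambda>t'. G t' i k", OF Gexp] by simp
  then show ?thesis using gG by blast
qed

lemma dGexp: "(\<Sum>m\<le>i. L t i m * dd (\<lambda>t'. Sb t' m k) + Sb t m k * dd (\<lambda>t'. L t' i m)) = 0"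
proof -
  have "dd (\<lambda>t'. G t' i k) = dd (\<lambda>t'. \<Sum>m\<le>i. L t' i m * Sb t' m k)"
    using cong[of "\<lambda>t'. G t' i k", OF Gexp] by simp
  also have "\<dots> = (\<Sum>m\<le>i. dd (\<lambda>t'. L t' i m * Sb t' m k))"
    using gL gU' by (intro good_sum[THEN conjunct2] ballI good_mult) auto
  also have "\<dots> = (\<Sum>m\<le>i. L t i m * dd (\<lambda>t'. Sb t' m k) + Sb t m k * dd (\<lambda>t'. L t' i m))"
    using gL gU' by (intro sum.cong refl good_mult(2))
  finally show ?thesis using gGd by simp
qed

lemma dL_triv: "i \<le> k \<Longrightarrow> dd (\<lambda>t'. L t' i k) = 0"
proof -
  assume "i \<le> k"
  then have "L t' i k = idm i k" if "fin_times t'" for t'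
    using Lt[OF that] unfolding unit_lower_def idm_def by (cases "i = k") auto
  from const_on[OF this] show ?thesis by simp
qed

lemma dU_triv: "k < i \<Longrightarrow> dd (\<lambda>t'. Sb t' i k) = 0"
proof -
  assume "k < i"
  then have "Sb t' i k = 0" if "fin_times t'" for t'
    using Ut[OF that] unfolding upper_def by auto
  from const_on[OF this] show ?thesis by simp
qed

lemma dLU: "dd (\<lambda>t'. L t' i k) = 0 \<and> dd (\<lambda>t'. Sb t' i k) = 0"
proof -
  have "\<forall>i k. i + k = n \<longrightarrow> dd (\<lambda>t'. L t' i k) = 0 \<and> dd (\<lambda>t'. Sb t' i k) = 0" for n
  proof (induction n rule: less_induct)
    case (less n)
    show ?case
    proof (intro allI impI)
      fix i k assume n: "i + k = n"
      have IH: "dd (\<lambda>t'. L t' i' k') = 0" "dd (\<lambda>t'. Sb t' i' k') = 0" if "i' + k' < n" for i' k'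
        using less.IH[of "i' + k'"] that by auto
      let ?f = "\<lambda>m. L t i m * dd (\<lambda>t'. Sb t' m k) + Sb t m k * dd (\<lambda>t'. L t' i m)"
      show "dd (\<lambda>t'. L t' i k) = 0 \<and> dd (\<lambda>t'. Sb t' i k) = 0"
      proof (cases "i \<le> k")
        case True
        have "sum ?f {..i} = ?f i"
        proof (rule sum_single_nz)
          fix m assume "m \<in> {..i}" "m \<noteq> i"
          then have "m < i" by auto
          then have "m + k < n" "i + m < n" using n True by auto
          then show "?f m = 0" using IH[of m k] IH[of i m] by simp
        qed auto
        then have "?f i = 0" using dGexp[of i k] by simp
        moreover have "L t i i = 1" using Lt[OF t] unfolding unit_lower_def by simp
        ultimately have "dd (\<lambda>t'. Sb t' i k) = 0" using dL_triv[of i i] by simp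
        then show ?thesis using dL_triv True by simp
      next
        case False
        then have ki: "k < i" by simp
        have "sum ?f {..i} = ?f k"
        proof (rule sum_single_nz)
          fix m assume m: "m \<in> {..i}" "m \<noteq> k"
          show "?f m = 0"
          proof (cases "m < k")
            case True
            then have "m + k < n" "i + m < n" using n ki by auto
            then show ?thesis using IH[of m k] IH[of i m] by simp
          next
            case False
            then have "k < m" using m by simp
            then show ?thesis using dU_triv[of k m] Ut[OF t] unfolding upper_def by simp
          qed
        qed (use ki in auto)
        then have "?f k = 0" using dGexp[of i k] by simp
        moreover have "dd (\<lambda>t'. Sb t' k k) = 0" using IH[of k k] n ki by simp
        ultimately have "Sb t k k * dd (\<lambda>t'. L t' i k) = 0" by simp
        then have "dd (\<lambda>t'. L t' i k) = 0" using Ut[OF t] by simp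
        then show ?thesis using dU_triv ki by simp
      qed
    qed
  qed
  then show ?thesis by blast
qed

lemma dS: "dd (\<lambda>t'. S t' i k) = 0"
proof (cases "k \<le> i")
  case False
  then have "S t' i k = 0" if "fin_times t'" for t' using St[OF that] by simp
  from const_on[OF this] show ?thesis by simp
next
  case True
  have eq: "(\<Sum>m\<le>i. L t m k * dd (\<lambda>t'. S t' i m)) = 0" for k
  proof -
    have "dd (\<lambda>t'. \<Sum>m\<le>i. S t' i m * L t' m k) = dd (\<lambda>_. idm i k)"
    proof -
      have "(\<Sum>m\<le>i. S t' i m * L t' m k) = idm i k" if "fin_times t'" for t'
        using Lt[OF that] St[OF that] lower_mmul[of "S t'" "L t'" i k] by simp
      from cong[OF this] show ?thesis by simp
    qed
    also have "\<dots> = 0" by (rule good_const)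
    finally have "dd (\<lambda>t'. \<Sum>m\<le>i. S t' i m * L t' m k) = 0" .
    moreover have "dd (\<lambda>t'. \<Sum>m\<le>i. S t' i m * L t' m k) =
        (\<Sum>m\<le>i. S t i m * dd (\<lambda>t'. L t' m k) + L t m k * dd (\<lambda>t'. S t' i m))"
      using gL gS' by (subst good_sum[THEN conjunct2]) (auto intro!: sum.cong good_mult(1) good_mult(2))
    ultimately show ?thesis using dLU by simp
  qed
  have "\<forall>k. i - k = d \<longrightarrow> k \<le> i \<longrightarrow> dd (\<lambda>t'. S t' i k) = 0" for d
  proof (induction d rule: less_induct)
    case (less d)
    show ?case
    proof (intro allI impI)
      fix k assume d: "i - k = d" and ki: "k \<le> i"
      have "(\<Sum>m\<le>i. L t m k * dd (\<lambda>t'. S t' i m)) = L t k k * dd (\<lambda>t'. S t' i k)"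
      proof (rule sum_single_nz)
        fix m assume m: "m \<in> {..i}" "m \<noteq> k"
        show "L t m k * dd (\<lambda>t'. S t' i m) = 0"
        proof (cases "m < k")
          case True
          then show ?thesis using Lt0[OF t] by simp
        next
          case False
          then have "k < m" "m \<le> i" using m by auto
          then show ?thesis using less.IH[of "i - m"] d by auto
        qed
      qed (use ki in auto)
      moreover have "L t k k = 1" using Lt[OF t] unfolding unit_lower_def by simp
      ultimately show "dd (\<lambda>t'. S t' i k) = 0" using eq[of k] by simp
    qed
  qed
  then show ?thesis using True by blast
qed

lemma dV: "dd (\<lambda>t'. V t' i k) = 0"
proof (cases "i \<le> k")
  case False
  then have "V t' i k = 0" if "fin_times t'" for t' using Vt[OF that] unfolding upper_def by simp
  from const_on[OF this] show ?thesis by simp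
next
  case True
  have eq: "(\<Sum>m\<in>{i..k}. Sb t i m * dd (\<lambda>t'. V t' m k)) = 0" for i
  proof -
    have "dd (\<lambda>t'. \<Sum>m\<in>{i..k}. Sb t' i m * V t' m k) = dd (\<lambda>_. idm i k)"
    proof -
      have "(\<Sum>m\<in>{i..k}. Sb t' i m * V t' m k) = idm i k" if "fin_times t'" for t'
        using Ut[OF that] Vt[OF that] upper_mmul[of "Sb t'" "V t'" i k] by simp
      from cong[OF this] show ?thesis by simp
    qed
    also have "\<dots> = 0" by (rule good_const)
    finally have "dd (\<lambda>t'. \<Sum>m\<in>{i..k}. Sb t' i m * V t' m k) = 0" .
    moreover have "dd (\<lambda>t'. \<Sum>m\<in>{i..k}. Sb t' i m * V t' m k) =
        (\<Sum>m\<in>{i..k}. Sb t i m * dd (\<lambda>t'. V t' m k) + V t m k * dd (\<lambda>t'. Sb t' i m))"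
      using gV gU' by (subst good_sum[THEN conjunct2]) (auto intro!: sum.cong good_mult(1) good_mult(2))
    ultimately show ?thesis using dLU by simp
  qed
  have "\<forall>i. k - i = d \<longrightarrow> i \<le> k \<longrightarrow> dd (\<lambda>t'. V t' i k) = 0" for d
  proof (induction d rule: less_induct)
    case (less d)
    show ?case
    proof (intro allI impI)
      fix i assume d: "k - i = d" and ik: "i \<le> k"
      have "(\<Sum>m\<in>{i..k}. Sb t i m * dd (\<lambda>t'. V t' m k)) = Sb t i i * dd (\<lambda>t'. V t' i k)"
      proof (rule sum_single_nz)
        fix m assume m: "m \<in> {i..k}" "m \<noteq> i"
        then have "i < m" "m \<le> k" by auto
        then show "Sb t i m * dd (\<lambda>t'. V t' m k) = 0" using less.IH[of "k - m"] d by auto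
      qed (use ik in auto)
      then have "Sb t i i * dd (\<lambda>t'. V t' i k) = 0" using eq[of i] by simp
      then show "dd (\<lambda>t'. V t' i k) = 0" using Ut[OF t] by simp
    qed
  qed
  then show ?thesis using True by blast
qed

lemma ZS: "Z (\<lambda>t'. S t' i k)" using gS dS unfolding Z_def by blast
lemma ZU: "Z (\<lambda>t'. Sb t' i k)" using gU dLU unfolding Z_def by blast
lemma ZL: "Z (\<lambda>t'. L t' i k)" using gL dLU unfolding Z_def by blast
lemma ZV: "Z (\<lambda>t'. V t' i k)" using gV dV unfolding Z_def by blast
lemma Zc: "Z (\<lambda>_. c)" using good_const unfolding Z_def by blast
lemma Zmult: "Z F \<Longrightarrow> Z H \<Longrightarrow> Z (\<lambda>x. F x * H x)"
  unfolding Z_def using good_mult by simp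
lemma Zsum: "finite A \<Longrightarrow> (\<And>m. m \<in> A \<Longrightarrow> Z (F m)) \<Longrightarrow> Z (\<lambda>x. \<Sum>m\<in>A. F m x)"
  unfolding Z_def using good_sum[where A=A and F=F] by simp
lemma Zcong:
  assumes e: "\<And>t'. fin_times t' \<Longrightarrow> F t' = H t'" and z: "Z H"
  shows "Z F"
  using cong[OF e] z unfolding Z_def by simp

lemma C1:
  assumes fin: "\<And>n. finite {m. Lm n m \<noteq> 0}"
  shows "Z (\<lambda>t'. mmul (mmul (S t') Lm) (L t') i k)"
proof -
  define MM where "MM = (\<Union>n\<le>i. {m. Lm n m \<noteq> 0})"
  have fM: "finite MM" unfolding MM_def using fin by auto
  have "mmul (mmul (S t') Lm) (L t') i k = (\<Sum>m\<in>MM. (\<Sum>n\<le>i. S t' i n * Lm n m) * L t' m k)"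
    if "fin_times t'" for t'
  proof -
    have X: "mmul (S t') Lm i m = (\<Sum>n\<le>i. S t' i n * Lm n m)" for m
      using St[OF that] by (rule lower_mmul)
    have "mmul (mmul (S t') Lm) (L t') i k = (\<Sum>m. mmul (S t') Lm i m * L t' m k)"
      unfolding mmul_def[of "mmul (S t') Lm"] by simp
    also have "\<dots> = (\<Sum>m\<in>MM. mmul (S t') Lm i m * L t' m k)"
    proof (rule suminf_finite[OF fM])
      fix m assume "m \<notin> MM"
      then have "\<forall>n\<le>i. Lm n m = 0" unfolding MM_def by auto
      then show "mmul (S t') Lm i m * L t' m k = 0" unfolding X by simp
    qed
    finally show ?thesis unfolding X .
  qed
  moreover have "Z (\<lambda>t'. \<Sum>m\<in>MM. (\<Sum>n\<le>i. S t' i n * Lm n m) * L t' m k)"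
    using fM by (intro Zsum Zmult ZL ZS Zc) auto
  ultimately show ?thesis by (rule Zcong)
qed

lemma C2:
  assumes fin: "\<And>n. finite {m. Lm n m \<noteq> 0}"
  shows "Z (\<lambda>t'. mmul (mmul (Sb t') (mtr Lm)) (V t') i k)"
proof -
  have "mmul (mmul (Sb t') (mtr Lm)) (V t') i k =
      (\<Sum>m\<le>k. (\<Sum>n\<in>{n. Lm m n \<noteq> 0}. Sb t' i n * Lm m n) * V t' m k)"
    if "fin_times t'" for t'
  proof -
    have X: "mmul (Sb t') (mtr Lm) i m = (\<Sum>n\<in>{n. Lm m n \<noteq> 0}. Sb t' i n * Lm m n)" for m
      unfolding mmul_def mtr_def by (rule suminf_finite[OF fin]) simp
    have "mmul (mmul (Sb t') (mtr Lm)) (V t') i k = (\<Sum>m. mmul (Sb t') (mtr Lm) i m * V t' m k)"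
      unfolding mmul_def[of "mmul (Sb t') (mtr Lm)"] by simp
    also have "\<dots> = (\<Sum>m\<le>k. mmul (Sb t') (mtr Lm) i m * V t' m k)"
      using Vt[OF that] unfolding upper_def by (intro suminf_finite) auto
    finally show ?thesis unfolding X .
  qed
  moreover have "Z (\<lambda>t'. \<Sum>m\<le>k. (\<Sum>n\<in>{n. Lm m n \<noteq> 0}. Sb t' i n * Lm m n) * V t' m k)"
    using fin by (intro Zsum Zmult ZV ZU Zc) auto
  ultimately show ?thesis by (rule Zcong)
qed

lemma C3: "Z (\<lambda>t'. mvec (S t') v i)"
proof -
  have "mvec (S t') v i = (\<Sum>m\<le>i. S t' i m * v m)" if "fin_times t'" for t'
    unfolding mvec_def using St[OF that] by (intro suminf_finite) auto
  moreover have "Z (\<lambda>t'. \<Sum>m\<le>i. S t' i m * v m)" by (intro Zsum Zmult ZS Zc) auto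
  ultimately show ?thesis by (rule Zcong)
qed

lemma C4: "Z (\<lambda>t'. mvec (mtr (V t')) v i)"
proof -
  have "mvec (mtr (V t')) v i = (\<Sum>m\<le>i. V t' m i * v m)" if "fin_times t'" for t'
    unfolding mvec_def mtr_def using Vt[OF that] unfolding upper_def by (intro suminf_finite) auto
  moreover have "Z (\<lambda>t'. \<Sum>m\<le>i. V t' m i * v m)" by (intro Zsum Zmult ZV Zc) auto
  ultimately show ?thesis by (rule Zcong)
qed

end


theorem proposition3p10:
  fixes M :: "real measure" and I :: "real set"
    and p1 p2 :: nat and n1 n2 :: "nat \<Rightarrow> nat"
    and w1 w2 :: "nat \<Rightarrow> real \<Rightarrow> real"
    and S Sb :: "times \<Rightarrow> mat"
    and j a' b' :: nat and t :: times
  assumes interval: "is_interval I"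
    and borel: "sets M = sets borel"
    and finite: "finite_measure M"
    and supp: "emeasure M (UNIV - I) = 0"
    and p1: "1 \<le> p1" and p2: "1 \<le> p2"
    and n1: "\<forall>a\<in>{1..p1}. 1 \<le> n1 a" and n2: "\<forall>b\<in>{1..p2}. 1 \<le> n2 b"
    and integrable: "\<forall>t i k. fin_times t \<longrightarrow> integrable M (\<lambda>x.
            x ^ (kidx p1 n1 i + kidx p2 n2 k) * w1 (aidx p1 n1 i) x * w2 (aidx p2 n2 k) x
            * exp ((\<Sum>j. fst t (Suc j) (aidx p1 n1 i) * x ^ Suc j)
                   - (\<Sum>j. snd t (Suc j) (aidx p2 n2 k) * x ^ Suc j)))"
    and S_tri: "\<forall>t. fin_times t \<longrightarrow> unit_lower (S t)"
    and Sb_tri: "\<forall>t. fin_times t \<longrightarrow> upper_invertible (Sb t)"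
    and factor: "\<forall>t. fin_times t \<longrightarrow>
                   gt M p1 n1 w1 p2 n2 w2 t = mmul (ltinv (S t)) (Sb t)"
    and smooth1: "\<forall>t. fin_times t \<longrightarrow> (\<forall>jj\<ge>1. \<forall>a\<in>{1..p1}. \<forall>i k.
                    (\<lambda>s. S (upd1 t jj a s) i k) differentiable (at (fst t jj a)) \<and>
                    (\<lambda>s. Sb (upd1 t jj a s) i k) differentiable (at (fst t jj a)))"
    and smooth2: "\<forall>t. fin_times t \<longrightarrow> (\<forall>jj\<ge>1. \<forall>b\<in>{1..p2}. \<forall>i k.
                    (\<lambda>s. S (upd2 t jj b s) i k) differentiable (at (snd t jj b)) \<and>
                    (\<lambda>s. Sb (upd2 t jj b s) i k) differentiable (at (snd t jj b)))"
    and t: "fin_times t"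
    and j: "1 \<le> j" and a': "a' \<in> {1..p1}" and b': "b' \<in> {1..p2}"
  shows
    "(\<forall>i k. (\<Sum>a=1..p1. D1 j a (\<lambda>t. mmul (mmul (S t) (Lam p1 n1 a')) (ltinv (S t)) i k) t)
         + (\<Sum>b=1..p2. D2 j b (\<lambda>t. mmul (mmul (S t) (Lam p1 n1 a')) (ltinv (S t)) i k) t) = 0) \<and>
    (\<forall>i k. (\<Sum>a=1..p1. D1 j a (\<lambda>t. mmul (mmul (Sb t) (mtr (Lam p2 n2 b'))) (utinv (Sb t)) i k) t)
         + (\<Sum>b=1..p2. D2 j b (\<lambda>t. mmul (mmul (Sb t) (mtr (Lam p2 n2 b'))) (utinv (Sb t)) i k) t) = 0) \<and>
    (\<forall>x i. (\<Sum>a=1..p1. D1 j a (\<lambda>t. mvec (S t) (chi p1 n1 a' x) i) t)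
         + (\<Sum>b=1..p2. D2 j b (\<lambda>t. mvec (S t) (chi p1 n1 a' x) i) t) = 0) \<and>
    (\<forall>x i. (\<Sum>a=1..p1. D1 j a (\<lambda>t. mvec (mtr (utinv (Sb t))) (chi p2 n2 b' x) i) t)
         + (\<Sum>b=1..p2. D2 j b (\<lambda>t. mvec (mtr (utinv (Sb t))) (chi p2 n2 b' x) i) t) = 0)"
  proof -
  define G where "G = gt M p1 n1 w1 p2 n2 w2"
  have s1: "(\<lambda>s. S (upd1 t j a s) i k) differentiable (at (fst t j a)) \<and>
            (\<lambda>s. Sb (upd1 t j a s) i k) differentiable (at (fst t j a))"
    if "a \<in> {1..p1}" for a i k using smooth1 t j that by blast
  have s2: "(\<lambda>s. S (upd2 t j b s) i k) differentiable (at (snd t j b)) \<and>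
            (\<lambda>s. Sb (upd2 t j b s) i k) differentiable (at (snd t j b))"
    if "b \<in> {1..p2}" for b i k using smooth2 t j that by blast
  have gS: "\<forall>i k. good p1 p2 j t (\<lambda>t'. S t' i k)"
    unfolding good_def using s1 s2 by blast
  have gU: "\<forall>i k. good p1 p2 j t (\<lambda>t'. Sb t' i k)"
    unfolding good_def using s1 s2 by blast
  have gG: "\<forall>i k. good p1 p2 j t (\<lambda>t'. G t' i k) \<longrightarrow> dl p1 p2 j t (\<lambda>t'. G t' i k) = 0"
    unfolding G_def using gt_dl[OF t j p1 n1 p2 n2] by blast
  have fac: "\<forall>t. fin_times t \<longrightarrow> G t = mmul (ltinv (S t)) (Sb t)"
    unfolding G_def using factor by blast
  interpret lax p1 p2 S Sb G j t
    by (rule lax.intro) (fact t, fact S_tri, fact Sb_tri, fact fac, fact gS, fact gU, fact gG)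
  have fin1: "\<And>nn. finite {m. Lam p1 n1 a' nn m \<noteq> 0}" by (rule Lam_fin[OF p1 n1])
  have fin2: "\<And>nn. finite {m. Lam p2 n2 b' nn m \<noteq> 0}" by (rule Lam_fin[OF p2 n2])
  show ?thesis
  proof (intro conjI allI)
    fix i k
    show "(\<Sum>a=1..p1. D1 j a (\<lambda>t. mmul (mmul (S t) (Lam p1 n1 a')) (ltinv (S t)) i k) t)
         + (\<Sum>b=1..p2. D2 j b (\<lambda>t. mmul (mmul (S t) (Lam p1 n1 a')) (ltinv (S t)) i k) t) = 0"
      using C1[OF fin1, where i=i and k=k] unfolding Z_def dl_def by simp
  next
    fix i k
    show "(\<Sum>a=1..p1. D1 j a (\<lambda>t. mmul (mmul (Sb t) (mtr (Lam p2 n2 b'))) (utinv (Sb t)) i k) t)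
         + (\<Sum>b=1..p2. D2 j b (\<lambda>t. mmul (mmul (Sb t) (mtr (Lam p2 n2 b'))) (utinv (Sb t)) i k) t) = 0"
      using C2[OF fin2, where i=i and k=k] unfolding Z_def dl_def by simp
  next
    fix x i
    show "(\<Sum>a=1..p1. D1 j a (\<lambda>t. mvec (S t) (chi p1 n1 a' x) i) t)
         + (\<Sum>b=1..p2. D2 j b (\<lambda>t. mvec (S t) (chi p1 n1 a' x) i) t) = 0"
      using C3[where v="chi p1 n1 a' x" and i=i] unfolding Z_def dl_def by simp
  next
    fix x i
    show "(\<Sum>a=1..p1. D1 j a (\<lambda>t. mvec (mtr (utinv (Sb t))) (chi p2 n2 b' x) i) t)
         + (\<Sum>b=1..p2. D2 j b (\<lambda>t. mvec (mtr (utinv (Sb t))) (chi p2 n2 b' x) i) t) = 0"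
      using C4[where v="chi p2 n2 b' x" and i=i] unfolding Z_def dl_def by simp
  qed
qed

end
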